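(* Let $G=(V,E)$ be a bispanning graph with $|V|\ge 3$. (i) If $G$ contains a pair of parallel edges, then $G$ is composite. (ii) If $G$ is atomic, then $G$ is simple. (iii) If $G$ contains a cut-vertex (vertex-connectivity $1$), then $G$ is composite. (iv) If $G$ has edge-connectivity $2$, then $G$ is composite. (v) If $G$ contains a vertex of degree $2$, then $G$ is composite.
   Context: Graphs are finite, undirected, may have parallel edges, no loops; simple means no parallel edges. A spanning tree of $G$ is $T\subseteq E$ with $(V,T)$ connected and acyclic; $G$ is bispanning if $E$ is the union of two disjoint spanning trees. A bispanning graph $G$ is composite if it contains a subgraph which is bispanning and is neither $G$ itself nor a single vertex; otherwise it is atomic. A cut-vertex is a vertex whose deletion increases the number of connected components. Edge-connectivity is the largest $k$ such that $|E|>k$ and deleting fewer than $k$ edges leaves $G$ connected. *)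

theory Defs
  imports Main
begin

text \<open>Finite multigraphs without loops: a vertex set V, an edge set E (edges are
abstract objects, so parallel edges are allowed) and an incidence map
ends assigning to each edge its 2-element set of endpoints.\<close>

definition mgraph :: "'v set \<Rightarrow> 'e set \<Rightarrow> ('e \<Rightarrow> 'v set) \<Rightarrow> bool" where
  "mgraph V E ends \<longleftrightarrow> finite V \<and> finite E \<and>
     (\<forall>e\<in>E. ends e \<subseteq> V \<and> card (ends e) = 2)"

definition adj :: "('e \<Rightarrow> 'v set) \<Rightarrow> 'e set \<Rightarrow> ('v \<times> 'v) set" where
  "adj ends F = {(x, y). \<exists>e\<in>F. ends e = {x, y}}"

definition reach :: "('e \<Rightarrow> 'v set) \<Rightarrow> 'e set \<Rightarrow> 'v \<Rightarrow> 'v \<Rightarrow> bool" where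
  "reach ends F u v \<longleftrightarrow> (u, v) \<in> (adj ends F)\<^sup>*"

definition connected_on :: "('e \<Rightarrow> 'v set) \<Rightarrow> 'v set \<Rightarrow> 'e set \<Rightarrow> bool" where
  "connected_on ends V F \<longleftrightarrow> V \<noteq> {} \<and> (\<forall>u\<in>V. \<forall>v\<in>V. reach ends F u v)"

definition acyclic_on :: "('e \<Rightarrow> 'v set) \<Rightarrow> 'e set \<Rightarrow> bool" where
  "acyclic_on ends F \<longleftrightarrow>
     (\<forall>e\<in>F. \<forall>x y. ends e = {x, y} \<longrightarrow> \<not> reach ends (F - {e}) x y)"

definition spanning_tree :: "'v set \<Rightarrow> 'e set \<Rightarrow> ('e \<Rightarrow> 'v set) \<Rightarrow> 'e set \<Rightarrow> bool" where
  "spanning_tree V E ends T \<longleftrightarrow> T \<subseteq> E \<and> connected_on ends V T \<and> acyclic_on ends T"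

definition bispanning :: "'v set \<Rightarrow> 'e set \<Rightarrow> ('e \<Rightarrow> 'v set) \<Rightarrow> bool" where
  "bispanning V E ends \<longleftrightarrow> mgraph V E ends \<and>
     (\<exists>T1 T2. spanning_tree V E ends T1 \<and> spanning_tree V E ends T2 \<and>
              T1 \<inter> T2 = {} \<and> T1 \<union> T2 = E)"

definition subgraph :: "'v set \<Rightarrow> 'e set \<Rightarrow> 'v set \<Rightarrow> 'e set \<Rightarrow> ('e \<Rightarrow> 'v set) \<Rightarrow> bool" where
  "subgraph V' E' V E ends \<longleftrightarrow> V' \<subseteq> V \<and> E' \<subseteq> E \<and> (\<forall>e\<in>E'. ends e \<subseteq> V')"

definition composite :: "'v set \<Rightarrow> 'e set \<Rightarrow> ('e \<Rightarrow> 'v set) \<Rightarrow> bool" where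
  "composite V E ends \<longleftrightarrow> bispanning V E ends \<and>
     (\<exists>V' E'. subgraph V' E' V E ends \<and> bispanning V' E' ends \<and>
              (V', E') \<noteq> (V, E) \<and> card V' \<noteq> 1)"

definition atomic :: "'v set \<Rightarrow> 'e set \<Rightarrow> ('e \<Rightarrow> 'v set) \<Rightarrow> bool" where
  "atomic V E ends \<longleftrightarrow> bispanning V E ends \<and> \<not> composite V E ends"

definition has_parallel_edges :: "'e set \<Rightarrow> ('e \<Rightarrow> 'v set) \<Rightarrow> bool" where
  "has_parallel_edges E ends \<longleftrightarrow> (\<exists>e1\<in>E. \<exists>e2\<in>E. e1 \<noteq> e2 \<and> ends e1 = ends e2)"

definition simple_graph :: "'e set \<Rightarrow> ('e \<Rightarrow> 'v set) \<Rightarrow> bool" where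
  "simple_graph E ends \<longleftrightarrow> \<not> has_parallel_edges E ends"

definition num_components :: "('e \<Rightarrow> 'v set) \<Rightarrow> 'v set \<Rightarrow> 'e set \<Rightarrow> nat" where
  "num_components ends V F = card {{u \<in> V. reach ends F w u} | w. w \<in> V}"

definition delete_vertex_edges :: "('e \<Rightarrow> 'v set) \<Rightarrow> 'e set \<Rightarrow> 'v \<Rightarrow> 'e set" where
  "delete_vertex_edges ends E v = {e \<in> E. v \<notin> ends e}"

definition cut_vertex :: "'v set \<Rightarrow> 'e set \<Rightarrow> ('e \<Rightarrow> 'v set) \<Rightarrow> 'v \<Rightarrow> bool" where
  "cut_vertex V E ends v \<longleftrightarrow> v \<in> V \<and>
     num_components ends (V - {v}) (delete_vertex_edges ends E v) > num_components ends V E"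

definition edge_connectivity :: "'v set \<Rightarrow> 'e set \<Rightarrow> ('e \<Rightarrow> 'v set) \<Rightarrow> nat" where
  "edge_connectivity V E ends = (GREATEST k. card E > k \<and>
     (\<forall>F. F \<subseteq> E \<and> card F < k \<longrightarrow> connected_on ends V (E - F)))"

definition degree :: "'e set \<Rightarrow> ('e \<Rightarrow> 'v set) \<Rightarrow> 'v \<Rightarrow> nat" where
  "degree E ends v = card {e \<in> E. v \<in> ends e}"

end

theory Submission
  imports Defs
begin

definition rE :: "('e \<Rightarrow> 'v set) \<Rightarrow> 'v set \<Rightarrow> 'e set \<Rightarrow> 'e set" where
  "rE ends S F = {e\<in>F. ends e \<subseteq> S}"

lemma reach_refl: "reach ends F a a" by (simp add: reach_def)

lemma adj_sym: "sym (adj ends F)"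
  unfolding adj_def sym_def by (auto simp: insert_commute)

lemma reach_sym: "reach ends F a b \<Longrightarrow> reach ends F b a"
  unfolding reach_def using sym_rtrancl[OF adj_sym] by (metis symD)

lemma reach_trans: "reach ends F a b \<Longrightarrow> reach ends F b c \<Longrightarrow> reach ends F a c"
  unfolding reach_def by (metis rtrancl_trans)

lemma reach_mono: "F \<subseteq> F' \<Longrightarrow> reach ends F a b \<Longrightarrow> reach ends F' a b"
proof -
  assume "F \<subseteq> F'" "reach ends F a b"
  have "adj ends F \<subseteq> adj ends F'" using \<open>F \<subseteq> F'\<close> unfolding adj_def by auto
  thus ?thesis using \<open>reach ends F a b\<close> unfolding reach_def by (meson rtrancl_mono subsetD)
qed

lemma reach_step: "e \<in> F \<Longrightarrow> ends e = {a, b} \<Longrightarrow> reach ends F a b"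
  unfolding reach_def adj_def by (rule r_into_rtrancl) auto

lemma reach_snoc: "reach ends F a b \<Longrightarrow> e \<in> F \<Longrightarrow> ends e = {b, c} \<Longrightarrow> reach ends F a c"
  using reach_trans reach_step by metis

lemma reach_induct[consumes 1, case_names refl step]:
  assumes "reach ends F a b"
    and "P a"
    and "\<And>y z e. reach ends F a y \<Longrightarrow> e \<in> F \<Longrightarrow> ends e = {y, z} \<Longrightarrow> P y \<Longrightarrow> P z"
  shows "P b"
proof -
  have "(a, b) \<in> (adj ends F)\<^sup>*" using assms(1) by (simp add: reach_def)
  thus ?thesis
  proof (induction rule: rtrancl_induct)
    case base then show ?case using assms(2) .
  next
    case (step y z)
    then obtain e where "e \<in> F" "ends e = {y, z}" unfolding adj_def by auto
    moreover have "reach ends F a y" using step(1) by (simp add: reach_def)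
    ultimately show ?case using assms(3) step(3) by blast
  qed
qed

lemma closed_reach:
  assumes "reach ends F a b" "a \<in> S"
    and "\<forall>e\<in>F. ends e \<inter> S \<noteq> {} \<longrightarrow> ends e \<subseteq> S"
  shows "b \<in> S \<and> reach ends (rE ends S F) a b"
  using assms(1)
proof (induction rule: reach_induct)
  case refl then show ?case using assms(2) reach_refl by metis
next
  case (step y z e)
  then have "ends e \<subseteq> S" using assms(3) by auto
  then have "z \<in> S" "e \<in> rE ends S F" using step by (auto simp: rE_def)
  then show ?case using step reach_snoc by metis
qed

lemma cross_exists:
  assumes "reach ends F a b" "a \<in> S" "b \<notin> S"
  shows "\<exists>e\<in>F. ends e \<inter> S \<noteq> {} \<and> \<not> ends e \<subseteq> S"
  using closed_reach[OF assms(1,2)] assms(3) by blast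

lemma split_reach:
  assumes "reach ends F a b" "ends c = {x, y}"
  shows "reach ends (F - {c}) a b \<or> reach ends (F - {c}) x b \<or> reach ends (F - {c}) y b"
  using assms(1)
proof (induction rule: reach_induct)
  case refl then show ?case using reach_refl by metis
next
  case (step u z e)
  show ?case
  proof (cases "e = c")
    case True
    then have "z = x \<or> z = y" using step assms(2) by (metis doubleton_eq_iff insertI1 insert_commute insert_iff)
    then show ?thesis using reach_refl by metis
  next
    case False
    then have "e \<in> F - {c}" using step by auto
    then show ?thesis using step reach_snoc by metis
  qed
qed

lemma acyclic_mono: "acyclic_on ends F \<Longrightarrow> F' \<subseteq> F \<Longrightarrow> acyclic_on ends F'"
  unfolding acyclic_on_def by (meson Diff_mono order_refl reach_mono subsetD)

lemma conn_from_root: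
  assumes "r \<in> S" "\<forall>z\<in>S. reach ends F r z"
  shows "connected_on ends S F"
  unfolding connected_on_def
proof (intro conjI ballI)
  show "S \<noteq> {}" using assms(1) by blast
  fix u v assume "u \<in> S" "v \<in> S"
  then have "reach ends F r u" "reach ends F r v" using assms(2) by blast+
  then show "reach ends F u v" using reach_sym reach_trans by metis
qed

lemma cut_edge_conn:
  assumes conn: "connected_on ends V F" and ev: "\<forall>e\<in>F. ends e \<subseteq> V"
    and SV: "S \<subseteq> V" and cF: "c \<in> F" and c2: "card (ends c) = 2"
    and ccross: "ends c \<inter> S \<noteq> {}" "\<not> ends c \<subseteq> S"
    and others: "\<forall>e\<in>F - {c}. ends e \<inter> S = {} \<or> ends e \<subseteq> S"
  shows "connected_on ends S (rE ends S F)"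
proof -
  from c2 obtain a b where ab: "ends c = {a, b}" unfolding card_2_iff by blast
  have "(a \<in> S \<and> b \<notin> S) \<or> (b \<in> S \<and> a \<notin> S)" using ccross ab by auto
  then obtain x y where xy: "ends c = {x, y}" "x \<in> S" "y \<notin> S"
  proof
    assume "a \<in> S \<and> b \<notin> S" then show ?thesis using that ab by blast
  next
    assume "b \<in> S \<and> a \<notin> S" then show ?thesis using that[of b a] ab by (simp add: insert_commute)
  qed
  have yV: "y \<in> V" using ev cF xy by auto
  have cl1: "\<forall>e\<in>F - {c}. ends e \<inter> S \<noteq> {} \<longrightarrow> ends e \<subseteq> S" using others by auto
  have cl2: "\<forall>e\<in>F - {c}. ends e \<inter> (V - S) \<noteq> {} \<longrightarrow> ends e \<subseteq> V - S" proof
    fix e assume e: "e \<in> F - {c}"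
    show "ends e \<inter> (V - S) \<noteq> {} \<longrightarrow> ends e \<subseteq> V - S"
      using others[rule_format, OF e] ev e by auto
  qed
  have "\<forall>z\<in>S. reach ends (rE ends S F) x z"
  proof
    fix z assume zS: "z \<in> S"
    have "x \<in> V" "z \<in> V" using SV xy(2) zS by auto
    then have "reach ends F x z" using conn unfolding connected_on_def by blast
    from split_reach[OF this xy(1)]
    have "reach ends (F - {c}) x z \<or> reach ends (F - {c}) y z" by blast
    moreover have "\<not> reach ends (F - {c}) y z"
    proof
      assume "reach ends (F - {c}) y z"
      from closed_reach[OF this _ cl2] yV xy(3) have "z \<in> V - S" by blast
      then show False using zS by blast
    qed
    ultimately have "reach ends (F - {c}) x z" by blast
    from closed_reach[OF this xy(2) cl1] have "reach ends (rE ends S (F - {c})) x z" by blast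
    then show "reach ends (rE ends S F) x z" by (rule reach_mono[rotated]) (auto simp: rE_def)
  qed
  then show ?thesis using conn_from_root[OF xy(2)] by blast
qed

lemma cut_vertex_conn:
  assumes conn: "connected_on ends V F"
    and SV: "S \<subseteq> V" and vS: "v \<in> S"
    and cl: "\<forall>e\<in>F. ends e \<inter> (S - {v}) \<noteq> {} \<longrightarrow> ends e \<subseteq> S"
  shows "connected_on ends S (rE ends S F)"
proof -
  have "\<forall>z\<in>S. reach ends (rE ends S F) v z"
  proof
    fix z assume zS: "z \<in> S"
    have "z \<in> V" "v \<in> V" using zS SV vS by auto
    then have rv: "reach ends F z v" using conn unfolding connected_on_def by blast
    have gen: "(b \<in> S \<and> reach ends (rE ends S F) z b) \<or> reach ends (rE ends S F) z v"
      if "reach ends F z b" for b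
    using that proof (induction rule: reach_induct)
      case refl then show ?case using zS reach_refl by metis
    next
      case (step y w e)
      show ?case
      proof (cases "reach ends (rE ends S F) z v")
        case True then show ?thesis by blast
      next
        case False
        then have yS: "y \<in> S" and r: "reach ends (rE ends S F) z y" using step(4) by auto
        show ?thesis
        proof (cases "y = v")
          case True then show ?thesis using r by blast
        next
          case False
          then have "ends e \<inter> (S - {v}) \<noteq> {}" using step(3) yS by auto
          then have eS: "ends e \<subseteq> S" using cl step(2) by blast
          then have "e \<in> rE ends S F" using step(2) by (simp add: rE_def)
          then have "reach ends (rE ends S F) z w" using reach_snoc[OF r _ step(3)] by blast
          moreover have "w \<in> S" using eS step(3) by auto
          ultimately show ?thesis by blast
        qed
      qed
    qed
    have "reach ends (rE ends S F) z v" using gen[OF rv] by blast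
    then show "reach ends (rE ends S F) v z" by (rule reach_sym)
  qed
  then show ?thesis by (rule conn_from_root[OF vS])
qed

lemma restr_bispanning:
  assumes bi: "bispanning V E ends" and SV: "S \<subseteq> V"
    and T: "spanning_tree V E ends T1" "spanning_tree V E ends T2" "T1 \<inter> T2 = {}" "T1 \<union> T2 = E"
    and c1: "connected_on ends S (rE ends S T1)" and c2: "connected_on ends S (rE ends S T2)"
  shows "bispanning S (rE ends S E) ends"
proof -
  have mg: "mgraph V E ends" using bi by (simp add: bispanning_def)
  have "mgraph S (rE ends S E) ends"
    using mg SV unfolding mgraph_def rE_def by (auto intro: finite_subset)
  moreover have "spanning_tree S (rE ends S E) ends (rE ends S T1)"
  proof -
    have "rE ends S T1 \<subseteq> T1" "T1 \<subseteq> E" using T(1) by (auto simp: rE_def spanning_tree_def)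
    then have "rE ends S T1 \<subseteq> rE ends S E" "acyclic_on ends (rE ends S T1)"
      using T(1) acyclic_mono[of ends T1 "rE ends S T1"] unfolding spanning_tree_def by (auto simp: rE_def)
    then show ?thesis using c1 unfolding spanning_tree_def by blast
  qed
  moreover have "spanning_tree S (rE ends S E) ends (rE ends S T2)"
  proof -
    have "rE ends S T2 \<subseteq> T2" "T2 \<subseteq> E" using T(2) by (auto simp: rE_def spanning_tree_def)
    then have "rE ends S T2 \<subseteq> rE ends S E" "acyclic_on ends (rE ends S T2)"
      using T(2) acyclic_mono[of ends T2 "rE ends S T2"] unfolding spanning_tree_def by (auto simp: rE_def)
    then show ?thesis using c2 unfolding spanning_tree_def by blast
  qed
  moreover have "rE ends S T1 \<inter> rE ends S T2 = {}" "rE ends S T1 \<union> rE ends S T2 = rE ends S E"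
    using T(3,4) unfolding rE_def by auto
  ultimately show ?thesis unfolding bispanning_def by blast
qed

lemma comp_of_sub:
  assumes bi: "bispanning V E ends" and SV: "S \<subseteq> V" "S \<noteq> V" and c: "card S \<ge> 2"
    and bs: "bispanning S (rE ends S E) ends"
  shows "composite V E ends"
proof -
  have "subgraph S (rE ends S E) V E ends" using SV unfolding subgraph_def rE_def by auto
  moreover have "(S, rE ends S E) \<noteq> (V, E)" using SV by auto
  moreover have "card S \<noteq> 1" using c by auto
  ultimately show ?thesis unfolding composite_def using bi bs by blast
qed

lemma reach_isolated: "reach ends F z w \<Longrightarrow> \<forall>e\<in>F. z \<notin> ends e \<Longrightarrow> w = z"
proof (induction rule: reach_induct)
  case refl then show ?case by simp
next
  case (step y w e) then show ?case by auto
qed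

lemma tree_card2:
  assumes mg: "mgraph V E ends" and T: "spanning_tree V E ends T" and c3: "card V \<ge> 3"
  shows "card T \<ge> 2"
proof (rule ccontr)
  assume "\<not> card T \<ge> 2"
  then have cT: "card T \<le> 1" by simp
  have TE: "T \<subseteq> E" and conn: "connected_on ends V T" using T by (auto simp: spanning_tree_def)
  have finE: "finite E" and ev: "\<forall>e\<in>E. ends e \<subseteq> V \<and> card (ends e) = 2" using mg by (auto simp: mgraph_def)
  have finT: "finite T" using finE TE finite_subset by blast
  obtain A where A: "A \<subseteq> V" "card A = 3" using obtain_subset_with_card_n[OF c3] by blast
  from A(2) have "\<exists>x y z. A = {x,y,z} \<and> x \<noteq> y \<and> y \<noteq> z \<and> x \<noteq> z" by (simp only: card_3_iff)
  then obtain x1 x2 x3 where X: "A = {x1, x2, x3}" "x1 \<noteq> x2" "x2 \<noteq> x3" "x1 \<noteq> x3"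
    by (elim exE conjE) (rule that)
  have "\<exists>z\<in>A. \<forall>e\<in>T. z \<notin> ends e"
  proof (cases "T = {}")
    case True then show ?thesis using X by auto
  next
    case False
    then have "card T \<noteq> 0" using finT by simp
    then have "card T = 1" using cT by linarith
    then obtain e where Te: "T = {e}" by (auto simp: card_1_singleton_iff)
    then have ce: "card (ends e) = 2" using ev TE by auto
    show ?thesis
    proof (rule ccontr)
      assume "\<not> ?thesis"
      then have "A \<subseteq> ends e" using Te by auto
      moreover have "finite (ends e)" using ce by (metis card.infinite zero_neq_numeral)
      ultimately have "card A \<le> card (ends e)" by (rule card_mono[rotated])
      then show False using ce A(2) by simp
    qed
  qed
  then obtain z where z: "z \<in> A" "\<forall>e\<in>T. z \<notin> ends e" by blast
  obtain w where w: "w \<in> A" "w \<noteq> z" using X by auto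
  have "reach ends T z w" using conn z(1) w(1) A(1) unfolding connected_on_def by blast
  then have "w = z" using reach_isolated z(2) by metis
  then show False using w by simp
qed

lemma card_gt1_two: "card X > 1 \<Longrightarrow> \<exists>A\<in>X. \<exists>B\<in>X. A \<noteq> B"
proof (rule ccontr)
  assume c: "card X > 1" and n: "\<not> (\<exists>A\<in>X. \<exists>B\<in>X. A \<noteq> B)"
  have fin: "finite X" using c card.infinite by fastforce
  have "card X \<le> Suc 0" using n fin by (simp add: card_le_Suc0_iff_eq)
  then show False using c by simp
qed

lemma cut_bisp:
  assumes bi: "bispanning V E ends" and SV: "S \<subseteq> V" and Sne: "S \<noteq> {}" and SV2: "S \<noteq> V"
    and cX: "card {e\<in>E. ends e \<inter> S \<noteq> {} \<and> \<not> ends e \<subseteq> S} \<le> 2"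
  shows "bispanning S (rE ends S E) ends"
proof -
  obtain T1 T2 where T: "spanning_tree V E ends T1" "spanning_tree V E ends T2" "T1 \<inter> T2 = {}" "T1 \<union> T2 = E"
    using bi unfolding bispanning_def by blast
  have mg: "mgraph V E ends" using bi by (simp add: bispanning_def)
  have finE: "finite E" and ev: "\<forall>e\<in>E. ends e \<subseteq> V \<and> card (ends e) = 2" using mg by (auto simp: mgraph_def)
  define X where "X = {e\<in>E. ends e \<inter> S \<noteq> {} \<and> \<not> ends e \<subseteq> S}"
  have finX: "finite X" using finE unfolding X_def by simp
  obtain a where a: "a \<in> S" using Sne by blast
  obtain b where b: "b \<in> V" "b \<notin> S" using SV SV2 by blast
  have aV: "a \<in> V" using a SV by blast
  have "reach ends T1 a b" using T(1) aV b(1) unfolding spanning_tree_def connected_on_def by blast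
  from cross_exists[OF this a b(2)] obtain c1 where c1: "c1 \<in> T1" "ends c1 \<inter> S \<noteq> {}" "\<not> ends c1 \<subseteq> S" by blast
  have "reach ends T2 a b" using T(2) aV b(1) unfolding spanning_tree_def connected_on_def by blast
  from cross_exists[OF this a b(2)] obtain c2 where c2: "c2 \<in> T2" "ends c2 \<inter> S \<noteq> {}" "\<not> ends c2 \<subseteq> S" by blast
  have neq: "c1 \<noteq> c2" using c1(1) c2(1) T(3) by blast
  have sub: "{c1, c2} \<subseteq> X" using c1 c2 T(4) unfolding X_def by blast
  have "card {c1, c2} = 2" using neq by simp
  then have XX: "X = {c1, c2}" using card_seteq[OF finX sub] cX unfolding X_def by simp
  have conn: "connected_on ends S (rE ends S T1)"
  proof (rule cut_edge_conn[where V=V and c=c1])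
    show "connected_on ends V T1" using T(1) by (simp add: spanning_tree_def)
    show "\<forall>e\<in>T1. ends e \<subseteq> V" using T(4) ev by blast
    show "card (ends c1) = 2" using T(4) ev c1(1) by blast
    show "\<forall>e\<in>T1 - {c1}. ends e \<inter> S = {} \<or> ends e \<subseteq> S"
    proof
      fix e assume e: "e \<in> T1 - {c1}"
      show "ends e \<inter> S = {} \<or> ends e \<subseteq> S"
      proof (rule ccontr)
        assume "\<not> ?thesis"
        then have "e \<in> X" using e T(4) unfolding X_def by blast
        then have "e = c2" using XX e by blast
        then show False using e c2(1) T(3) by blast
      qed
    qed
  qed (use SV c1 in auto)
  have conn2: "connected_on ends S (rE ends S T2)"
  proof (rule cut_edge_conn[where V=V and c=c2])
    show "connected_on ends V T2" using T(2) by (simp add: spanning_tree_def)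
    show "\<forall>e\<in>T2. ends e \<subseteq> V" using T(4) ev by blast
    show "card (ends c2) = 2" using T(4) ev c2(1) by blast
    show "\<forall>e\<in>T2 - {c2}. ends e \<inter> S = {} \<or> ends e \<subseteq> S"
    proof
      fix e assume e: "e \<in> T2 - {c2}"
      show "ends e \<inter> S = {} \<or> ends e \<subseteq> S"
      proof (rule ccontr)
        assume "\<not> ?thesis"
        then have "e \<in> X" using e T(4) unfolding X_def by blast
        then have "e = c1" using XX e by blast
        then show False using e c1(1) T(3) by blast
      qed
    qed
  qed (use SV c2 in auto)
  show ?thesis by (rule restr_bispanning[OF bi SV T conn conn2])
qed

lemma cut_composite:
  assumes bi: "bispanning V E ends" and c3: "card V \<ge> 3" and SV: "S \<subseteq> V" and Sne: "S \<noteq> {}" and SV2: "S \<noteq> V"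
    and cX: "card {e\<in>E. ends e \<inter> S \<noteq> {} \<and> \<not> ends e \<subseteq> S} \<le> 2"
  shows "composite V E ends"
proof -
  have mg: "mgraph V E ends" using bi by (simp add: bispanning_def)
  have finV: "finite V" and ev: "\<forall>e\<in>E. ends e \<subseteq> V \<and> card (ends e) = 2" using mg by (auto simp: mgraph_def)
  have "card (V - S) + card S = card V" using card_Diff_subset[OF finite_subset[OF SV finV] SV]
    card_mono[OF finV SV] by simp
  then have "card S \<ge> 2 \<or> card (V - S) \<ge> 2" using c3 by linarith
  then show ?thesis
  proof
    assume "card S \<ge> 2"
    then show ?thesis using comp_of_sub[OF bi SV SV2] cut_bisp[OF bi SV Sne SV2 cX] by blast
  next
    assume c: "card (V - S) \<ge> 2"
    have eq: "{e\<in>E. ends e \<inter> (V - S) \<noteq> {} \<and> \<not> ends e \<subseteq> V - S} = {e\<in>E. ends e \<inter> S \<noteq> {} \<and> \<not> ends e \<subseteq> S}"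
      using ev by blast
    have "bispanning (V - S) (rE ends (V - S) E) ends"
      by (rule cut_bisp[OF bi]) (use SV SV2 Sne cX eq in auto)
    moreover have "V - S \<noteq> V" using SV Sne by blast
    ultimately show ?thesis using comp_of_sub[OF bi _ _ c] by blast
  qed
qed

lemma single_edge_tree:
  assumes "ends e = {x, y}" "x \<noteq> y" "e \<in> E'"
  shows "spanning_tree {x, y} E' ends {e}"
  unfolding spanning_tree_def
proof (intro conjI)
  show "{e} \<subseteq> E'" using assms by simp
  have r: "reach ends {e} x y" using reach_step[of e "{e}" ends x y] assms by simp
  show "connected_on ends {x, y} {e}"
    unfolding connected_on_def using r reach_sym reach_refl by fastforce
  show "acyclic_on ends {e}"
    unfolding acyclic_on_def
  proof (intro ballI allI impI notI)
    fix f a b assume f: "f \<in> {e}" "ends f = {a, b}" "reach ends ({e} - {f}) a b"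
    then have "b = a" using reach_isolated[OF f(3)] by simp
    then show False using f assms by (metis doubleton_eq_iff singletonD)
  qed
qed

lemma parallel_composite:
  assumes bi: "bispanning V E ends" and c3: "card V \<ge> 3" and p: "has_parallel_edges E ends"
  shows "composite V E ends"
proof -
  obtain e1 e2 where e: "e1 \<in> E" "e2 \<in> E" "e1 \<noteq> e2" "ends e1 = ends e2"
    using p unfolding has_parallel_edges_def by blast
  have mg: "mgraph V E ends" using bi by (simp add: bispanning_def)
  have ev: "ends e1 \<subseteq> V" "card (ends e1) = 2" using mg e(1) by (auto simp: mgraph_def)
  from ev(2) have "\<exists>x y. ends e1 = {x, y} \<and> x \<noteq> y" by (simp only: card_2_iff)
  then obtain x y where xy: "ends e1 = {x, y}" "x \<noteq> y" by blast
  have t1: "spanning_tree {x, y} {e1, e2} ends {e1}" by (rule single_edge_tree) (use xy in auto)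
  have t2: "spanning_tree {x, y} {e1, e2} ends {e2}" by (rule single_edge_tree) (use xy e in auto)
  have mg2: "mgraph {x, y} {e1, e2} ends" unfolding mgraph_def using xy e ev by auto
  have bs: "bispanning {x, y} {e1, e2} ends"
    unfolding bispanning_def using mg2 t1 t2 e(3) by blast
  have sub: "subgraph {x, y} {e1, e2} V E ends" unfolding subgraph_def using xy e ev by auto
  have "card {x, y} = 2" using xy by simp
  then have ne: "({x, y}, {e1, e2}) \<noteq> (V, E)" "card {x, y} \<noteq> 1" using c3 by auto
  show ?thesis unfolding composite_def using bi sub bs ne by blast
qed

lemma bisp_conn_E:
  assumes bi: "bispanning V E ends"
  shows "connected_on ends V E"
proof -
  obtain T1 where T: "spanning_tree V E ends T1" using bi unfolding bispanning_def by blast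
  then have "T1 \<subseteq> E" "connected_on ends V T1" by (auto simp: spanning_tree_def)
  then show ?thesis unfolding connected_on_def using reach_mono by metis
qed

lemma degree2_composite:
  assumes bi: "bispanning V E ends" and c3: "card V \<ge> 3" and v: "v \<in> V" and d: "degree E ends v = 2"
  shows "composite V E ends"
proof -
  have mg: "mgraph V E ends" using bi by (simp add: bispanning_def)
  have finV: "finite V" and ev: "\<forall>e\<in>E. ends e \<subseteq> V \<and> card (ends e) = 2" using mg by (auto simp: mgraph_def)
  have eq: "{e\<in>E. ends e \<inter> {v} \<noteq> {} \<and> \<not> ends e \<subseteq> {v}} = {e\<in>E. v \<in> ends e}"
  proof (intro set_eqI iffI)
    fix e assume "e \<in> {e\<in>E. v \<in> ends e}"
    then have "e \<in> E" "v \<in> ends e" by auto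
    moreover have "\<not> ends e \<subseteq> {v}"
    proof
      assume "ends e \<subseteq> {v}"
      then have "card (ends e) \<le> card {v}" by (rule card_mono[rotated]) simp
      then show False using ev \<open>e \<in> E\<close> by simp
    qed
    ultimately show "e \<in> {e\<in>E. ends e \<inter> {v} \<noteq> {} \<and> \<not> ends e \<subseteq> {v}}" by blast
  qed auto
  have "card V \<noteq> 1" using c3 by simp
  then have "{v} \<noteq> V" by (metis card.empty card_insert_disjoint empty_iff finite.emptyI One_nat_def)
  show ?thesis
    by (rule cut_composite[OF bi c3, of "{v}"]) (use v eq d \<open>{v} \<noteq> V\<close> in \<open>auto simp: degree_def\<close>)
qed

lemma edgeconn2_composite:
  assumes bi: "bispanning V E ends" and c3: "card V \<ge> 3" and k: "edge_connectivity V E ends = 2"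
  shows "composite V E ends"
proof -
  obtain T1 T2 where T: "spanning_tree V E ends T1" "spanning_tree V E ends T2" "T1 \<inter> T2 = {}" "T1 \<union> T2 = E"
    using bi unfolding bispanning_def by blast
  have mg: "mgraph V E ends" using bi by (simp add: bispanning_def)
  have finE: "finite E" and finV: "finite V" and ev: "\<forall>e\<in>E. ends e \<subseteq> V \<and> card (ends e) = 2"
    using mg by (auto simp: mgraph_def)
  have "card T1 \<ge> 2" "card T2 \<ge> 2" using tree_card2[OF mg T(1) c3] tree_card2[OF mg T(2) c3] by auto
  moreover have "card E = card T1 + card T2"
    using card_Un_disjoint[of T1 T2] T(3,4) finE by (metis finite_Un)
  ultimately have cE: "card E > 3" by linarith
  define P where "P = (\<lambda>k. card E > k \<and>
     (\<forall>F. F \<subseteq> E \<and> card F < k \<longrightarrow> connected_on ends V (E - F)))"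
  have ec: "edge_connectivity V E ends = Greatest P" unfolding edge_connectivity_def P_def by simp
  have "\<not> P 3"
  proof
    assume "P 3"
    moreover have "\<And>y. P y \<Longrightarrow> y \<le> card E" unfolding P_def by simp
    ultimately have "3 \<le> Greatest P" by (rule Greatest_le_nat)
    then show False using k ec by simp
  qed
  then obtain F where F: "F \<subseteq> E" "card F < 3" "\<not> connected_on ends V (E - F)"
    using cE unfolding P_def by blast
  have Vne: "V \<noteq> {}" using c3 by auto
  then obtain u w where uw: "u \<in> V" "w \<in> V" "\<not> reach ends (E - F) u w"
    using F(3) unfolding connected_on_def by blast
  define S where "S = {z\<in>V. reach ends (E - F) u z}"
  have SV: "S \<subseteq> V" unfolding S_def by blast
  have Sne: "S \<noteq> {}" using uw(1) reach_refl unfolding S_def by fastforce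
  have SV2: "S \<noteq> V" using uw unfolding S_def by blast
  have XF: "{e\<in>E. ends e \<inter> S \<noteq> {} \<and> \<not> ends e \<subseteq> S} \<subseteq> F"
  proof
    fix e assume e: "e \<in> {e\<in>E. ends e \<inter> S \<noteq> {} \<and> \<not> ends e \<subseteq> S}"
    show "e \<in> F"
    proof (rule ccontr)
      assume nF: "e \<notin> F"
      from e have eE: "e \<in> E" by blast
      then have "card (ends e) = 2" using ev by blast
      then have "\<exists>a b. ends e = {a, b} \<and> a \<noteq> b" by (simp only: card_2_iff)
      then obtain a b where ab: "ends e = {a, b}" by blast
      have abV: "a \<in> V" "b \<in> V" using ev eE ab by auto
      have eEF: "e \<in> E - F" using eE nF by blast
      have "a \<in> S \<or> b \<in> S" using e ab by auto
      moreover have "a \<in> S \<Longrightarrow> b \<in> S"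
      proof -
        assume "a \<in> S"
        then have "reach ends (E - F) u a" unfolding S_def by blast
        then have "reach ends (E - F) u b" using reach_snoc[of ends "E - F" u a e b] eEF ab by blast
        then show "b \<in> S" using abV unfolding S_def by blast
      qed
      moreover have "b \<in> S \<Longrightarrow> a \<in> S"
      proof -
        assume "b \<in> S"
        then have "reach ends (E - F) u b" unfolding S_def by blast
        moreover have "ends e = {b, a}" using ab by (simp add: insert_commute)
        ultimately have "reach ends (E - F) u a" using reach_snoc[of ends "E - F" u b e a] eEF by blast
        then show "a \<in> S" using abV unfolding S_def by blast
      qed
      ultimately have "a \<in> S \<and> b \<in> S" by blast
      then have "ends e \<subseteq> S" using ab by simp
      then show False using e by blast
    qed
  qed
  have "finite F" using F(1) finE finite_subset by blast
  then have "card {e\<in>E. ends e \<inter> S \<noteq> {} \<and> \<not> ends e \<subseteq> S} \<le> card F" using XF card_mono by blast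
  then have cX: "card {e\<in>E. ends e \<inter> S \<noteq> {} \<and> \<not> ends e \<subseteq> S} \<le> 2" using F(2) by linarith
  show ?thesis by (rule cut_composite[OF bi c3 SV Sne SV2 cX])
qed

lemma cutvertex_composite:
  assumes bi: "bispanning V E ends" and c3: "card V \<ge> 3" and cv: "cut_vertex V E ends v"
  shows "composite V E ends"
proof -
  obtain T1 T2 where T: "spanning_tree V E ends T1" "spanning_tree V E ends T2" "T1 \<inter> T2 = {}" "T1 \<union> T2 = E"
    using bi unfolding bispanning_def by blast
  have mg: "mgraph V E ends" using bi by (simp add: bispanning_def)
  have finV: "finite V" and ev: "\<forall>e\<in>E. ends e \<subseteq> V \<and> card (ends e) = 2"
    using mg by (auto simp: mgraph_def)
  have vV: "v \<in> V" using cv by (simp add: cut_vertex_def)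
  have connE: "connected_on ends V E" by (rule bisp_conn_E[OF bi])
  have "{{u \<in> V. reach ends E w u} | w. w \<in> V} = {V}"
  proof -
    have "\<And>w. w \<in> V \<Longrightarrow> {u \<in> V. reach ends E w u} = V" using connE unfolding connected_on_def by blast
    moreover have "V \<noteq> {}" using connE unfolding connected_on_def by blast
    ultimately show ?thesis by blast
  qed
  then have "num_components ends V E = 1" unfolding num_components_def by simp
  define Ev where "Ev = delete_vertex_edges ends E v"
  have "card {{u \<in> V - {v}. reach ends Ev w u} | w. w \<in> V - {v}} > 1"
    using cv \<open>num_components ends V E = 1\<close> unfolding cut_vertex_def num_components_def Ev_def by simp
  from card_gt1_two[OF this] obtain w1 w2 where w: "w1 \<in> V - {v}" "w2 \<in> V - {v}"
    "{u \<in> V - {v}. reach ends Ev w1 u} \<noteq> {u \<in> V - {v}. reach ends Ev w2 u}" by blast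
  have nr: "\<not> reach ends Ev w1 w2"
  proof
    assume r: "reach ends Ev w1 w2"
    have "{u \<in> V - {v}. reach ends Ev w1 u} = {u \<in> V - {v}. reach ends Ev w2 u}"
      using r reach_sym reach_trans by metis
    then show False using w(3) by blast
  qed
  define C where "C = {u \<in> V - {v}. reach ends Ev w1 u}"
  define S where "S = insert v C"
  have SV: "S \<subseteq> V" unfolding S_def C_def using vV by blast
  have vS: "v \<in> S" unfolding S_def by blast
  have w1C: "w1 \<in> C" unfolding C_def using w(1) reach_refl by fastforce
  have w2S: "w2 \<notin> S" unfolding S_def C_def using w(2) nr by blast
  have SV2: "S \<noteq> V" using w2S w(2) by blast
  have cS: "card S \<ge> 2"
  proof -
    have "{v, w1} \<subseteq> S" unfolding S_def using w1C by blast
    moreover have "finite S" using SV finV finite_subset by blast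
    ultimately have "card {v, w1} \<le> card S" by (rule card_mono[rotated])
    moreover have "card {v, w1} = 2" using w(1) by auto
    ultimately show ?thesis by simp
  qed
  have SC: "S - {v} = C" unfolding S_def C_def by blast
  have cl: "\<forall>e\<in>E. ends e \<inter> (S - {v}) \<noteq> {} \<longrightarrow> ends e \<subseteq> S"
  proof (intro ballI impI)
    fix e assume eE: "e \<in> E" and ne: "ends e \<inter> (S - {v}) \<noteq> {}"
    then obtain a where a: "a \<in> ends e" "a \<in> C" using SC by blast
    have "card (ends e) = 2" using ev eE by blast
    then have "\<exists>x y. ends e = {x, y} \<and> x \<noteq> y" by (simp only: card_2_iff)
    then obtain b where ab: "ends e = {a, b}" using a(1) by (metis insert_commute insert_iff singletonD)
    have bV: "b \<in> V" using ev eE ab by auto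
    have "b \<in> S"
    proof (cases "b = v")
      case True then show ?thesis using vS by simp
    next
      case False
      have "a \<noteq> v" using a(2) unfolding C_def by blast
      then have "v \<notin> ends e" using ab False by simp
      then have "e \<in> Ev" unfolding Ev_def delete_vertex_edges_def using eE by blast
      moreover have "reach ends Ev w1 a" using a(2) unfolding C_def by blast
      ultimately have "reach ends Ev w1 b" using reach_snoc[of ends Ev w1 a e b] ab by blast
      then show ?thesis using bV False unfolding S_def C_def by blast
    qed
    moreover have "a \<in> S" using a(2) unfolding S_def by blast
    ultimately show "ends e \<subseteq> S" using ab by simp
  qed
  have c1: "connected_on ends S (rE ends S T1)"
  proof (rule cut_vertex_conn[OF _ SV vS])
    show "connected_on ends V T1" using T(1) by (simp add: spanning_tree_def)
    show "\<forall>e\<in>T1. ends e \<inter> (S - {v}) \<noteq> {} \<longrightarrow> ends e \<subseteq> S" using cl T(4) by blast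
  qed
  have c2: "connected_on ends S (rE ends S T2)"
  proof (rule cut_vertex_conn[OF _ SV vS])
    show "connected_on ends V T2" using T(2) by (simp add: spanning_tree_def)
    show "\<forall>e\<in>T2. ends e \<inter> (S - {v}) \<noteq> {} \<longrightarrow> ends e \<subseteq> S" using cl T(4) by blast
  qed
  have "bispanning S (rE ends S E) ends" by (rule restr_bispanning[OF bi SV T c1 c2])
  then show ?thesis using comp_of_sub[OF bi SV SV2 cS] by blast
qed

theorem mainTheorem8:
  fixes V :: "'v set" and E :: "'e set" and ends :: "'e \<Rightarrow> 'v set"
  assumes "bispanning V E ends" and "card V \<ge> 3"
  shows "(has_parallel_edges E ends \<longrightarrow> composite V E ends)
       \<and> (atomic V E ends \<longrightarrow> simple_graph E ends)
       \<and> ((\<exists>v. cut_vertex V E ends v) \<longrightarrow> composite V E ends)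
       \<and> (edge_connectivity V E ends = 2 \<longrightarrow> composite V E ends)
       \<and> ((\<exists>v\<in>V. degree E ends v = 2) \<longrightarrow> composite V E ends)"
proof (intro conjI impI)
  show "has_parallel_edges E ends \<Longrightarrow> composite V E ends"
    using parallel_composite[OF assms] by blast
  show "atomic V E ends \<Longrightarrow> simple_graph E ends"
    using parallel_composite[OF assms] unfolding atomic_def simple_graph_def by blast
  show "\<exists>v. cut_vertex V E ends v \<Longrightarrow> composite V E ends"
    using cutvertex_composite[OF assms] by blast
  show "edge_connectivity V E ends = 2 \<Longrightarrow> composite V E ends"
    using edgeconn2_composite[OF assms] by blast
  show "\<exists>v\<in>V. degree E ends v = 2 \<Longrightarrow> composite V E ends"
    using degree2_composite[OF assms] by blast
qed

end
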